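(* Let $(Q,\le_Q)$ be a well-quasi-ordered set. A quasi-ordered sequence over $Q$ is a finite sequence $s=(s_1,\dots,s_m)\in Q^m$ together with a quasi-order $\precsim_s$ on the index set $\{1,\dots,m\}$ such that $i<j$ implies $i\precsim_s j$. For quasi-ordered sequences $s$ (of length $m$) and $t$ (of length $m'$), write $s\le t$ if there is a strictly increasing map $f:\{1,\dots,m\}\to\{1,\dots,m'\}$ such that for all $i,j$, $i\precsim_s j$ if and only if $f(i)\precsim_t f(j)$, and for all $i$, $s_i\le_Q t_{f(i)}$. Then $\le$ is a well-quasi-order on the set of quasi-ordered sequences over $Q$.
   Context: A quasi-order is a reflexive, transitive relation. A well-quasi-order is a quasi-order such that every infinite sequence $x_0,x_1,\dots$ has indices $i<j$ with $x_i\le x_j$. *)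

theory Defs
  imports Main
begin

definition qo_on :: "'a set \<Rightarrow> ('a \<Rightarrow> 'a \<Rightarrow> bool) \<Rightarrow> bool" where
  "qo_on A r \<longleftrightarrow> (\<forall>x\<in>A. r x x) \<and> (\<forall>x\<in>A. \<forall>y\<in>A. \<forall>z\<in>A. r x y \<longrightarrow> r y z \<longrightarrow> r x z)"

definition wqo_on :: "'a set \<Rightarrow> ('a \<Rightarrow> 'a \<Rightarrow> bool) \<Rightarrow> bool" where
  "wqo_on A r \<longleftrightarrow> qo_on A r \<and>
     (\<forall>g::nat \<Rightarrow> 'a. (\<forall>i. g i \<in> A) \<longrightarrow> (\<exists>i j. i < j \<and> r (g i) (g j)))"

definition qoseq :: "'a set \<Rightarrow> 'a list \<times> (nat \<Rightarrow> nat \<Rightarrow> bool) \<Rightarrow> bool" where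
  "qoseq Q x \<longleftrightarrow> (case x of (s, R) \<Rightarrow>
     set s \<subseteq> Q \<and> qo_on {..<length s} R \<and>
     (\<forall>i j. i < j \<and> j < length s \<longrightarrow> R i j))"

definition qoseq_le :: "('a \<Rightarrow> 'a \<Rightarrow> bool) \<Rightarrow> 'a list \<times> (nat \<Rightarrow> nat \<Rightarrow> bool)
    \<Rightarrow> 'a list \<times> (nat \<Rightarrow> nat \<Rightarrow> bool) \<Rightarrow> bool" where
  "qoseq_le P x y \<longleftrightarrow> (case x of (s, R) \<Rightarrow> case y of (t, R') \<Rightarrow>
     (\<exists>f. strict_mono_on {..<length s} f \<and> f ` {..<length s} \<subseteq> {..<length t} \<and>
        (\<forall>i<length s. \<forall>j<length s. R i j \<longleftrightarrow> R' (f i) (f j)) \<and>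
        (\<forall>i<length s. P (s ! i) (t ! f i))))"

end

theory Submission
  imports Defs "HOL-Library.Sublist" "HOL-Library.Infinite_Set"
begin


definition good_on :: "'a set \<Rightarrow> ('a \<Rightarrow> 'a \<Rightarrow> bool) \<Rightarrow> bool" where
  "good_on A r \<longleftrightarrow> (\<forall>g::nat \<Rightarrow> 'a. (\<forall>i. g i \<in> A) \<longrightarrow> (\<exists>i j. i < j \<and> r (g i) (g j)))"

definition badl :: "'a set \<Rightarrow> ('a \<Rightarrow> 'a \<Rightarrow> bool) \<Rightarrow> (nat \<Rightarrow> 'a list) \<Rightarrow> bool" where
  "badl A P g \<longleftrightarrow> (\<forall>i. g i \<in> lists A) \<and> (\<forall>i j. i < j \<longrightarrow> \<not> list_emb P (g i) (g j))"

definition Mstep :: "'a set \<Rightarrow> ('a \<Rightarrow> 'a \<Rightarrow> bool) \<Rightarrow> (nat \<Rightarrow> 'a list) \<Rightarrow> nat \<Rightarrow> (nat \<Rightarrow> 'a list)" where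
  "Mstep A P f n = (SOME g. badl A P g \<and> (\<forall>i<n. g i = f i) \<and>
     (\<forall>h. badl A P h \<and> (\<forall>i<n. h i = f i) \<longrightarrow> length (g n) \<le> length (h n)))"

lemma Mstep_spec:
  assumes "badl A P h" "\<forall>i<n. h i = f i"
  shows "badl A P (Mstep A P f n) \<and> (\<forall>i<n. Mstep A P f n i = f i) \<and>
     (\<forall>h. badl A P h \<and> (\<forall>i<n. h i = f i) \<longrightarrow> length (Mstep A P f n n) \<le> length (h n))"
proof -
  have "\<exists>g. badl A P g \<and> (\<forall>i<n. g i = f i) \<and>
     (\<forall>h. badl A P h \<and> (\<forall>i<n. h i = f i) \<longrightarrow> length (g n) \<le> length (h n))"
    using ex_has_least_nat[of "\<lambda>g. badl A P g \<and> (\<forall>i<n. g i = f i)" h "\<lambda>g. length (g n)"] assms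
    by blast
  then show ?thesis unfolding Mstep_def by (rule someI_ex)
qed

primrec Gseq :: "'a set \<Rightarrow> ('a \<Rightarrow> 'a \<Rightarrow> bool) \<Rightarrow> (nat \<Rightarrow> 'a list) \<Rightarrow> nat \<Rightarrow> (nat \<Rightarrow> 'a list)" where
  "Gseq A P g0 0 = Mstep A P g0 0"
| "Gseq A P g0 (Suc n) = Mstep A P (Gseq A P g0 n) (Suc n)"

lemma chain_seq:
  assumes "(N::nat) \<in> S" "\<And>i. i \<in> S \<Longrightarrow> \<exists>j>i. j \<in> S \<and> R i j"
  shows "\<exists>\<phi>. strict_mono \<phi> \<and> (\<forall>k. \<phi> k \<in> S) \<and> \<phi> 0 = N \<and> (\<forall>k. R (\<phi> k) (\<phi> (Suc k)))"
proof -
  define \<phi> where "\<phi> = rec_nat N (\<lambda>_ x. SOME j. j > x \<and> j \<in> S \<and> R x j)"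
  have phi0: "\<phi> 0 = N" and S: "\<phi> (Suc k) = (SOME j. j > \<phi> k \<and> j \<in> S \<and> R (\<phi> k) j)" for k
    by (simp_all add: \<phi>_def)
  have inS: "\<phi> k \<in> S" for k
  proof (induction k)
    case 0 then show ?case using assms(1) phi0 by simp
  next
    case (Suc k) then show ?case unfolding S using someI_ex[OF assms(2)[OF Suc]] by blast
  qed
  have st: "\<phi> (Suc k) > \<phi> k \<and> R (\<phi> k) (\<phi> (Suc k))" for k
    unfolding S using someI_ex[OF assms(2)[OF inS[of k]]] by blast
  have "strict_mono \<phi>" using st by (simp add: strict_mono_Suc_iff)
  then show ?thesis using inS phi0 st by blast
qed

lemma higman:
  assumes good: "good_on A P"
    and tr: "\<And>x y z. x \<in> A \<Longrightarrow> y \<in> A \<Longrightarrow> z \<in> A \<Longrightarrow> P x y \<Longrightarrow> P y z \<Longrightarrow> P x z"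
  shows "good_on (lists A) (list_emb P)"
proof (rule ccontr)
  assume "\<not> good_on (lists A) (list_emb P)"
  then obtain g0 where g0: "badl A P g0" unfolding good_on_def badl_def by blast
  define G where "G = Gseq A P g0"
  have Gbad: "badl A P (G n)" for n
  proof (induction n)
    case 0 then show ?case using Mstep_spec[OF g0, of 0] by (simp add: G_def)
  next
    case (Suc n) then show ?case using Mstep_spec[OF Suc, of "Suc n" "G n"] by (simp add: G_def)
  qed
  have Gagree: "G (Suc n) i = G n i" if "i \<le> n" for n i
    using Mstep_spec[OF Gbad[of n], of "Suc n" "G n"] that by (simp add: G_def)
  have Gstable: "G k i = G i i" if "i \<le> k" for k i
    using that
  proof (induction k)
    case 0 then show ?case by simp
  next
    case (Suc k) then show ?case
      by (metis Gagree le_Suc_eq)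
  qed
  define m where "m i = G i i" for i
  have mbad: "badl A P m"
    unfolding badl_def
  proof (intro conjI allI impI notI)
    fix i show "m i \<in> lists A" using Gbad[of i] unfolding m_def badl_def by blast
  next
    fix i j assume "i < j" "list_emb P (m i) (m j)"
    moreover have "G j i = G i i" using Gstable[of i j] \<open>i < j\<close> by simp
    ultimately show False using Gbad[of j] unfolding m_def badl_def by metis
  qed
  have mmin: "length (m n) \<le> length (h n)" if "badl A P h" "\<forall>i<n. h i = m i" for h n
  proof (cases n)
    case 0 then show ?thesis using Mstep_spec[OF g0, of 0] that by (simp add: G_def m_def)
  next
    case (Suc n')
    have "\<forall>i<Suc n'. h i = G n' i"
    proof (intro allI impI)
      fix i assume "i < Suc n'"
      then have "G n' i = G i i" using Gstable[of i n'] by simp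
      then show "h i = G n' i" using that(2) Suc \<open>i < Suc n'\<close> unfolding m_def by simp
    qed
    then show ?thesis using Mstep_spec[OF Gbad[of n'], of "Suc n'" "G n'"] that(1) Suc
      by (simp add: G_def m_def)
  qed
  have mne: "m i \<noteq> []" for i
  proof
    assume "m i = []"
    then have "list_emb P (m i) (m (Suc i))" by simp
    then show False using mbad unfolding badl_def by blast
  qed
  define a where "a i = hd (m i)" for i
  define r where "r i = tl (m i)" for i
  have mar: "m i = a i # r i" for i using mne[of i] by (simp add: a_def r_def)
  have aA: "a i \<in> A" and rA: "r i \<in> lists A" for i
    using mbad mar[of i] unfolding badl_def by (metis Cons_in_lists_iff)+
  define D where "D = {i. \<forall>j>i. \<not> P (a i) (a j)}"
  have "finite D"
  proof (rule ccontr)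
    assume inf: "infinite D"
    then obtain N where N: "N \<in> D" by (metis finite.emptyI ex_in_conv)
    have "\<exists>j>i. j \<in> D \<and> True" if "i \<in> D" for i
      using inf unfolding infinite_nat_iff_unbounded by simp
    then obtain \<phi> :: "nat \<Rightarrow> nat" where \<phi>: "strict_mono \<phi>" "\<forall>k. \<phi> k \<in> D"
      using chain_seq[of N D "\<lambda>_ _. True"] N by blast
    obtain i j where "i < j" "P (a (\<phi> i)) (a (\<phi> j))"
      using good aA unfolding good_on_def by (drule_tac x="\<lambda>k. a (\<phi> k)" in spec) auto
    then show False using \<phi> unfolding D_def strict_mono_def by blast
  qed
  then obtain N where N: "\<forall>i\<ge>N. i \<notin> D"
    unfolding finite_nat_set_iff_bounded by (meson not_less)
  have "\<exists>j>i. j \<in> {N..} \<and> P (a i) (a j)" if "i \<in> {N..}" for i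
    using N that unfolding D_def by force
  then obtain \<phi> :: "nat \<Rightarrow> nat" where \<phi>: "strict_mono \<phi>" "\<forall>k. \<phi> k \<in> {N..}" "\<phi> 0 = N"
      "\<forall>k. P (a (\<phi> k)) (a (\<phi> (Suc k)))"
    using chain_seq[of N "{N..}" "\<lambda>i j. P (a i) (a j)"] by blast
  have Pchain: "P (a (\<phi> k)) (a (\<phi> l))" if "k < l" for k l
    using that
  proof (induction l)
    case 0 then show ?case by simp
  next
    case (Suc l)
    show ?case
    proof (cases "k = l")
      case True then show ?thesis using \<phi>(4) by simp
    next
      case False then have "k < l" using Suc by simp
      then show ?thesis using Suc.IH \<phi>(4) tr aA by blast
    qed
  qed
  define h where "h i = (if i < N then m i else r (\<phi> (i - N)))" for i
  have hA: "h i \<in> lists A" for i using mbad rA unfolding h_def badl_def by auto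
  have "\<not> badl A P h"
  proof
    assume "badl A P h"
    then have "length (m N) \<le> length (h N)" using mmin[of h N] by (simp add: h_def)
    then show False using \<phi>(3) mar[of N] by (simp add: h_def)
  qed
  then obtain i j where ij: "i < j" "list_emb P (h i) (h j)" using hA unfolding badl_def by blast
  show False
  proof (cases "j < N")
    case True then show ?thesis using ij mbad unfolding h_def badl_def by auto
  next
    case False
    then have jN: "N \<le> j" by simp
    have ge: "\<phi> k \<ge> N" for k using \<phi>(2) by auto
    show ?thesis
    proof (cases "i < N")
      case True
      then have "list_emb P (m i) (r (\<phi> (j - N)))" using ij jN by (simp add: h_def)
      then have "list_emb P (m i) (m (\<phi> (j - N)))" by (simp add: mar[of "\<phi> (j - N)"] list_emb_Cons)
      moreover have "i < \<phi> (j - N)" using True ge[of "j-N"] by simp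
      ultimately show False using mbad unfolding badl_def by blast
    next
      case False
      then have e: "list_emb P (r (\<phi> (i - N))) (r (\<phi> (j - N)))" using ij jN by (simp add: h_def)
      have kl: "i - N < j - N" using False ij(1) by simp
      then have "list_emb P (m (\<phi> (i - N))) (m (\<phi> (j - N)))"
        using e Pchain[OF kl] by (simp add: mar list_emb_Cons2)
      moreover have "\<phi> (i - N) < \<phi> (j - N)" using \<phi>(1) kl by (simp add: strict_mono_less)
      ultimately show False using mbad unfolding badl_def by blast
    qed
  qed
qed



fun blk :: "'a list list \<Rightarrow> nat \<Rightarrow> nat" where
  "blk [] i = 0"
| "blk (b#bs) i = (if i < length b then 0 else Suc (blk bs (i - length b)))"

lemma smo_iff: "strict_mono_on A f \<longleftrightarrow> (\<forall>x\<in>A. \<forall>y\<in>A. x < y \<longrightarrow> f x < f y)"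
  unfolding strict_mono_on_def monotone_on_def by blast

lemma emb_nth:
  assumes "list_emb P b c"
  shows "\<exists>g. strict_mono_on {..<length b} g \<and> g ` {..<length b} \<subseteq> {..<length c} \<and>
    (\<forall>i<length b. P (b ! i) (c ! g i))"
  using assms
proof (induction rule: list_emb.induct)
  case (list_emb_Nil ys)
  then show ?case by (auto simp: smo_iff)
next
  case (list_emb_Cons xs ys y)
  then obtain g where g: "strict_mono_on {..<length xs} g" "g ` {..<length xs} \<subseteq> {..<length ys}"
    "\<forall>i<length xs. P (xs ! i) (ys ! g i)" by blast
  show ?case
    by (rule exI[of _ "\<lambda>i. Suc (g i)"]) (use g in \<open>auto simp: smo_iff\<close>)
next
  case (list_emb_Cons2 x y xs ys)
  then obtain g where g: "strict_mono_on {..<length xs} g" "g ` {..<length xs} \<subseteq> {..<length ys}"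
    "\<forall>i<length xs. P (xs ! i) (ys ! g i)" by blast
  show ?case
  proof (rule exI[of _ "\<lambda>i. if i = 0 then 0 else Suc (g (i - 1))"], intro conjI)
    show "strict_mono_on {..<length (x # xs)} (\<lambda>i. if i = 0 then 0 else Suc (g (i - 1)))"
      unfolding smo_iff using g(1) unfolding smo_iff
      by (auto simp: less_diff_conv2)
    show "(\<lambda>i. if i = 0 then 0 else Suc (g (i - 1))) ` {..<length (x # xs)} \<subseteq> {..<length (y # ys)}"
      using g(2) by (force simp: less_Suc_eq_0_disj)
    show "\<forall>i<length (x # xs). P ((x # xs) ! i) ((y # ys) ! (if i = 0 then 0 else Suc (g (i - 1))))"
      using g(3) list_emb_Cons2(1) by (auto simp: less_Suc_eq_0_disj nth_Cons')
  qed
qed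

lemma emb_q:
  assumes "list_emb (list_emb P) bs cs"
  shows "\<exists>f. strict_mono_on {..<length (concat bs)} f \<and>
    f ` {..<length (concat bs)} \<subseteq> {..<length (concat cs)} \<and>
    (\<forall>i<length (concat bs). \<forall>j<length (concat bs). blk bs i \<le> blk bs j \<longleftrightarrow> blk cs (f i) \<le> blk cs (f j)) \<and>
    (\<forall>i<length (concat bs). P (concat bs ! i) (concat cs ! f i))"
  using assms
proof (induction rule: list_emb.induct)
  case (list_emb_Nil ys)
  then show ?case by (auto simp: smo_iff)
next
  case (list_emb_Cons xs ys y)
  then obtain f where f: "strict_mono_on {..<length (concat xs)} f"
    "f ` {..<length (concat xs)} \<subseteq> {..<length (concat ys)}"
    "\<forall>i<length (concat xs). \<forall>j<length (concat xs). blk xs i \<le> blk xs j \<longleftrightarrow> blk ys (f i) \<le> blk ys (f j)"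
    "\<forall>i<length (concat xs). P (concat xs ! i) (concat ys ! f i)" by blast
  show ?case
    by (rule exI[of _ "\<lambda>i. length y + f i"]) (use f in \<open>auto simp: smo_iff nth_append\<close>)
next
  case (list_emb_Cons2 b c bs cs)
  obtain g where g: "strict_mono_on {..<length b} g" "g ` {..<length b} \<subseteq> {..<length c}"
    "\<forall>i<length b. P (b ! i) (c ! g i)" using emb_nth[OF list_emb_Cons2(1)] by blast
  obtain f where f: "strict_mono_on {..<length (concat bs)} f"
    "f ` {..<length (concat bs)} \<subseteq> {..<length (concat cs)}"
    "\<forall>i<length (concat bs). \<forall>j<length (concat bs). blk bs i \<le> blk bs j \<longleftrightarrow> blk cs (f i) \<le> blk cs (f j)"
    "\<forall>i<length (concat bs). P (concat bs ! i) (concat cs ! f i)" using list_emb_Cons2(3) by blast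
  define h where "h i = (if i < length b then g i else length c + f (i - length b))" for i
  have hlt: "h i < length c" if "i < length b" for i using g(2) that by (auto simp: h_def)
  have hge: "h i = length c + f (i - length b)" if "\<not> i < length b" for i using that by (simp add: h_def)
  show ?case
  proof (rule exI[of _ h], intro conjI)
    show "strict_mono_on {..<length (concat (b # bs))} h"
      unfolding smo_iff
    proof (intro ballI impI)
      fix i j assume ij: "i \<in> {..<length (concat (b # bs))}" "j \<in> {..<length (concat (b # bs))}" "i < j"
      show "h i < h j"
      proof (cases "j < length b")
        case True
        then have "i < length b" using ij by simp
        then have "g i < g j" using True ij(3) g(1) unfolding smo_iff by blast
        then show ?thesis using True \<open>i < length b\<close> by (simp add: h_def)
      next
        case False
        show ?thesis
        proof (cases "i < length b")
          case True then show ?thesis using hlt[of i] hge[of j] False by simp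
        next
          case F2: False
          have "i - length b < j - length b" "i - length b < length (concat bs)" "j - length b < length (concat bs)"
            using ij F2 False by auto
          then have "f (i - length b) < f (j - length b)" using f(1) unfolding smo_iff by blast
          then show ?thesis using hge F2 False by simp
        qed
      qed
    qed
    show "h ` {..<length (concat (b # bs))} \<subseteq> {..<length (concat (c # cs))}"
    proof
      fix y assume "y \<in> h ` {..<length (concat (b # bs))}"
      then obtain i where i: "i < length (concat (b # bs))" "y = h i" by auto
      show "y \<in> {..<length (concat (c # cs))}"
      proof (cases "i < length b")
        case True then show ?thesis using hlt[of i] i by simp
      next
        case False
        then have "i - length b < length (concat bs)" using i by simp
        then have "f (i - length b) < length (concat cs)" using f(2) by (auto simp: image_subset_iff)
        then show ?thesis using hge[of i] False i by simp
      qed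
    qed
    show "\<forall>i<length (concat (b # bs)). \<forall>j<length (concat (b # bs)).
       blk (b # bs) i \<le> blk (b # bs) j \<longleftrightarrow> blk (c # cs) (h i) \<le> blk (c # cs) (h j)"
    proof (intro allI impI)
      fix i j assume ij: "i < length (concat (b # bs))" "j < length (concat (b # bs))"
      show "blk (b # bs) i \<le> blk (b # bs) j \<longleftrightarrow> blk (c # cs) (h i) \<le> blk (c # cs) (h j)"
        using hlt[of i] hlt[of j] hge[of i] hge[of j] f(3)[rule_format, of "i - length b" "j - length b"] ij
        by auto
    qed
    show "\<forall>i<length (concat (b # bs)). P (concat (b # bs) ! i) (concat (c # cs) ! h i)"
    proof (intro allI impI)
      fix i assume i: "i < length (concat (b # bs))"
      show "P (concat (b # bs) ! i) (concat (c # cs) ! h i)"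
      proof (cases "i < length b")
        case True then show ?thesis using hlt[of i] g(3) by (simp add: nth_append h_def)
      next
        case False then show ?thesis using hge[of i] f(4) i by (simp add: nth_append)
      qed
    qed
  qed
qed


lemma decomp:
  assumes "set s \<subseteq> Q" "\<forall>i<length s. R i i"
    "\<forall>i<length s. \<forall>j<length s. \<forall>k<length s. R i j \<longrightarrow> R j k \<longrightarrow> R i k"
    "\<forall>i j. i < j \<and> j < length s \<longrightarrow> R i j"
  shows "\<exists>bs. bs \<in> lists (lists Q) \<and> (\<forall>b\<in>set bs. b \<noteq> []) \<and> concat bs = s \<and>
    (\<forall>i<length s. \<forall>j<length s. R i j \<longleftrightarrow> blk bs i \<le> blk bs j)"
  using assms
proof (induction s arbitrary: R)
  case Nil show ?case by (rule exI[of _ "[]"]) simp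
next
  case (Cons x s')
  define L where "L = length (x # s')"
  have rf: "R i i" if "i < L" for i using Cons.prems(2) that by (simp add: L_def)
  have tr: "R i k" if "i < L" "j < L" "k < L" "R i j" "R j k" for i j k
    using Cons.prems(3) that unfolding L_def by blast
  have ex: "R i j" if "i < j" "j < L" for i j using Cons.prems(4) that by (simp add: L_def)
  define R' where "R' i j = R (Suc i) (Suc j)" for i j
  have "\<exists>bs. bs \<in> lists (lists Q) \<and> (\<forall>b\<in>set bs. b \<noteq> []) \<and> concat bs = s' \<and>
    (\<forall>i<length s'. \<forall>j<length s'. R' i j \<longleftrightarrow> blk bs i \<le> blk bs j)"
  proof (rule Cons.IH)
    show "set s' \<subseteq> Q" using Cons.prems(1) by simp
    show "\<forall>i<length s'. R' i i" using rf by (simp add: R'_def L_def)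
    show "\<forall>i<length s'. \<forall>j<length s'. \<forall>k<length s'. R' i j \<longrightarrow> R' j k \<longrightarrow> R' i k"
      unfolding R'_def L_def using tr[unfolded L_def] by (metis Suc_less_eq length_Cons)
    show "\<forall>i j. i < j \<and> j < length s' \<longrightarrow> R' i j" using ex by (simp add: R'_def L_def)
  qed
  then obtain bs' where bs': "bs' \<in> lists (lists Q)" "\<forall>b\<in>set bs'. b \<noteq> []" "concat bs' = s'"
    "\<forall>i<length s'. \<forall>j<length s'. R' i j \<longleftrightarrow> blk bs' i \<le> blk bs' j" by blast
  have xQ: "x \<in> Q" using Cons.prems(1) by simp
  show ?case
  proof (cases "s' = []")
    case True
    show ?thesis
      by (rule exI[of _ "[[x]]"]) (use True xQ rf[of 0] in \<open>simp add: L_def\<close>)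
  next
    case False
    then obtain b cs where bcs: "bs' = b # cs" using bs'(3) by (cases bs') auto
    have bne: "b \<noteq> []" using bs'(2) bcs by simp
    have L2: "1 < L" using False by (simp add: L_def)
    show ?thesis
    proof (cases "R 1 0")
      case True
      show ?thesis
      proof (rule exI[of _ "(x # b) # cs"], intro conjI)
        show "(x # b) # cs \<in> lists (lists Q)" using bs'(1) bcs xQ by simp
        show "\<forall>b\<in>set ((x # b) # cs). b \<noteq> []" using bs'(2) bcs by simp
        show "concat ((x # b) # cs) = x # s'" using bs'(3) bcs by simp
        have b0: "blk (b # cs) 0 = 0" using bne by simp
        have bS: "blk ((x # b) # cs) (Suc i) = blk (b # cs) i" for i by simp
        show "\<forall>i<length (x # s'). \<forall>j<length (x # s'). R i j \<longleftrightarrow> blk ((x # b) # cs) i \<le> blk ((x # b) # cs) j"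
        proof (intro allI impI)
          fix i j assume i: "i < length (x # s')" and j: "j < length (x # s')"
          show "R i j \<longleftrightarrow> blk ((x # b) # cs) i \<le> blk ((x # b) # cs) j"
          proof (cases i)
            case 0
            then show ?thesis using rf[of 0] ex[of 0 j] L2 j by (cases j) (auto simp: L_def)
          next
            case (Suc i')
            show ?thesis
            proof (cases j)
              case 0
              have iL: "i < L" using i by (simp add: L_def)
              have "R i 0 \<longleftrightarrow> R i 1"
                using tr[OF iL _ L2, of 0] tr[OF iL L2, of 0] True ex[of 0 1] L2 iL by force
              moreover have "R' i' 0 \<longleftrightarrow> blk bs' i' \<le> blk bs' 0" using bs'(4) i False Suc by simp
              ultimately show ?thesis using Suc 0 b0 bcs by (simp add: R'_def)
            next
              case (Suc j')
              then show ?thesis using bs'(4) i j \<open>i = Suc i'\<close> bcs by (simp add: R'_def)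
            qed
          qed
        qed
      qed
    next
      case False
      show ?thesis
      proof (rule exI[of _ "[x] # bs'"], intro conjI)
        show "[x] # bs' \<in> lists (lists Q)" using bs'(1) xQ by simp
        show "\<forall>b\<in>set ([x] # bs'). b \<noteq> []" using bs'(2) by simp
        show "concat ([x] # bs') = x # s'" using bs'(3) by simp
        show "\<forall>i<length (x # s'). \<forall>j<length (x # s'). R i j \<longleftrightarrow> blk ([x] # bs') i \<le> blk ([x] # bs') j"
        proof (intro allI impI)
          fix i j assume i: "i < length (x # s')" and j: "j < length (x # s')"
          show "R i j \<longleftrightarrow> blk ([x] # bs') i \<le> blk ([x] # bs') j"
          proof (cases i)
            case 0
            then show ?thesis using rf[of 0] ex[of 0 j] L2 j by (cases j) (auto simp: L_def)
          next
            case (Suc i')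
            show ?thesis
            proof (cases j)
              case 0
              have iL: "i < L" using i by (simp add: L_def)
              have "R 1 i" using rf[OF L2] ex[of 1 i] iL Suc by (cases "i = 1") auto
              then have "\<not> R i 0" using tr[OF L2 iL, of 0] False L2 by auto
              then show ?thesis using Suc 0 by simp
            next
              case (Suc j')
              then show ?thesis using bs'(4) i j \<open>i = Suc i'\<close> by (simp add: R'_def)
            qed
          qed
        qed
      qed
    qed
  qed
qed


theorem lemma7:
  fixes Q :: "'a set" and P :: "'a \<Rightarrow> 'a \<Rightarrow> bool"
  assumes "wqo_on Q P"
  shows "wqo_on {x. qoseq Q x} (qoseq_le P)"
proof -
  have Prefl: "\<And>x. x \<in> Q \<Longrightarrow> P x x" using assms unfolding wqo_on_def qo_on_def by blast
  have Ptr: "\<And>x y z. x \<in> Q \<Longrightarrow> y \<in> Q \<Longrightarrow> z \<in> Q \<Longrightarrow> P x y \<Longrightarrow> P y z \<Longrightarrow> P x z"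
    using assms unfolding wqo_on_def qo_on_def by blast
  have gd: "good_on Q P" using assms unfolding wqo_on_def good_on_def by blast
  have g1: "good_on (lists Q) (list_emb P)" by (rule higman[OF gd Ptr])
  have tr1: "list_emb P x z" if xyz: "x \<in> lists Q" "y \<in> lists Q" "z \<in> lists Q"
      and e: "list_emb P x y" "list_emb P y z" for x y z
  proof -
    have "\<And>a b c. a \<in> set x \<Longrightarrow> b \<in> set y \<Longrightarrow> c \<in> set z \<Longrightarrow> P a b \<Longrightarrow> P b c \<Longrightarrow> P a c"
      using Ptr xyz by (meson in_listsD)
    then show ?thesis using list_emb_trans[of x y z P] e by blast
  qed
  have g2: "good_on (lists (lists Q)) (list_emb (list_emb P))" by (rule higman[OF g1 tr1])
  show ?thesis unfolding wqo_on_def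
  proof (intro conjI allI impI)
    show "qo_on {x. qoseq Q x} (qoseq_le P)" unfolding qo_on_def
    proof (intro conjI ballI impI)
      fix x assume "x \<in> {x. qoseq Q x}"
      then obtain s R where x: "x = (s, R)" "set s \<subseteq> Q" by (cases x) (auto simp: qoseq_def)
      have "\<forall>i<length s. P (s ! i) (s ! i)" using x(2) Prefl by (simp add: subset_iff)
      then show "qoseq_le P x x" unfolding qoseq_le_def x
        by (simp, intro exI[of _ id]) (auto simp: smo_iff)
    next
      fix x y z assume xin: "x \<in> {x. qoseq Q x}" and yin: "y \<in> {x. qoseq Q x}" and zin: "z \<in> {x. qoseq Q x}"
        and xy: "qoseq_le P x y" and yz: "qoseq_le P y z"
      obtain s R where x: "x = (s, R)" "set s \<subseteq> Q" using xin by (cases x) (auto simp: qoseq_def)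
      obtain t R' where y: "y = (t, R')" "set t \<subseteq> Q" using yin by (cases y) (auto simp: qoseq_def)
      obtain u R'' where z: "z = (u, R'')" "set u \<subseteq> Q" using zin by (cases z) (auto simp: qoseq_def)
      obtain f where f: "strict_mono_on {..<length s} f" "f ` {..<length s} \<subseteq> {..<length t}"
        "\<forall>i<length s. \<forall>j<length s. R i j \<longleftrightarrow> R' (f i) (f j)" "\<forall>i<length s. P (s ! i) (t ! f i)"
        using xy unfolding qoseq_le_def x y by auto
      obtain g where g: "strict_mono_on {..<length t} g" "g ` {..<length t} \<subseteq> {..<length u}"
        "\<forall>i<length t. \<forall>j<length t. R' i j \<longleftrightarrow> R'' (g i) (g j)" "\<forall>i<length t. P (t ! i) (u ! g i)"
        using yz unfolding qoseq_le_def y z by auto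
      have fr: "f i < length t" if "i < length s" for i using f(2) that by auto
      have gr: "g i < length u" if "i < length t" for i using g(2) that by auto
      show "qoseq_le P x z" unfolding qoseq_le_def x z
      proof (simp, rule exI[of _ "\<lambda>i. g (f i)"], intro conjI)
        show "strict_mono_on {..<length s} (\<lambda>i. g (f i))"
          using f(1) g(1) fr unfolding smo_iff by auto
        show "(\<lambda>i. g (f i)) ` {..<length s} \<subseteq> {..<length u}" using fr gr by auto
        show "\<forall>i<length s. \<forall>j<length s. R i j = R'' (g (f i)) (g (f j))" using f(3) g(3) fr by auto
        show "\<forall>i<length s. P (s ! i) (u ! g (f i))"
        proof (intro allI impI)
          fix i assume i: "i < length s"
          have "s ! i \<in> Q" "t ! f i \<in> Q" "u ! g (f i) \<in> Q" using x(2) y(2) z(2) i fr gr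
            by (auto intro!: subsetD[OF _ nth_mem])
          then show "P (s ! i) (u ! g (f i))" using Ptr f(4) g(4) i fr by blast
        qed
      qed
    qed
  next
    fix X :: "nat \<Rightarrow> 'a list \<times> (nat \<Rightarrow> nat \<Rightarrow> bool)" assume X: "\<forall>i. X i \<in> {x. qoseq Q x}"
    have "\<forall>n. \<exists>bs. bs \<in> lists (lists Q) \<and> concat bs = fst (X n) \<and>
      (\<forall>i<length (fst (X n)). \<forall>j<length (fst (X n)). snd (X n) i j \<longleftrightarrow> blk bs i \<le> blk bs j)"
    proof
      fix n
      obtain s R where x: "X n = (s, R)" by (cases "X n") auto
      have q0: "qoseq Q (X n)" using X by blast
      have q: "qoseq Q (s, R)" using q0 unfolding x .
      show "\<exists>bs. bs \<in> lists (lists Q) \<and> concat bs = fst (X n) \<and>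
        (\<forall>i<length (fst (X n)). \<forall>j<length (fst (X n)). snd (X n) i j \<longleftrightarrow> blk bs i \<le> blk bs j)"
      proof -
        have qq: "set s \<subseteq> Q \<and> qo_on {..<length s} R \<and> (\<forall>i j. i < j \<and> j < length s \<longrightarrow> R i j)"
          using q by (simp add: qoseq_def)
        then have h1: "set s \<subseteq> Q" and h4: "\<forall>i j. i < j \<and> j < length s \<longrightarrow> R i j"
          and qo: "qo_on {..<length s} R" by blast+
        have h2: "\<forall>i<length s. R i i" using qo unfolding qo_on_def by simp
        have h3: "\<forall>i<length s. \<forall>j<length s. \<forall>k<length s. R i j \<longrightarrow> R j k \<longrightarrow> R i k"
          using qo unfolding qo_on_def lessThan_iff by blast
        obtain bs where "bs \<in> lists (lists Q)" "concat bs = s"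
          "\<forall>i<length s. \<forall>j<length s. R i j \<longleftrightarrow> blk bs i \<le> blk bs j"
          using decomp[OF h1 h2 h3 h4] by blast
        then show ?thesis unfolding x by auto
      qed
    qed
    then have "\<exists>B. \<forall>n. B n \<in> lists (lists Q) \<and> concat (B n) = fst (X n) \<and>
      (\<forall>i<length (fst (X n)). \<forall>j<length (fst (X n)). snd (X n) i j \<longleftrightarrow> blk (B n) i \<le> blk (B n) j)"
      by (rule choice)
    then obtain B where B0: "\<forall>n. B n \<in> lists (lists Q) \<and> concat (B n) = fst (X n) \<and>
      (\<forall>i<length (fst (X n)). \<forall>j<length (fst (X n)). snd (X n) i j \<longleftrightarrow> blk (B n) i \<le> blk (B n) j)"
      by (rule exE)
    have B: "\<And>n. B n \<in> lists (lists Q)" "\<And>n. concat (B n) = fst (X n)"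
      "\<And>n. \<forall>i<length (fst (X n)). \<forall>j<length (fst (X n)). snd (X n) i j \<longleftrightarrow> blk (B n) i \<le> blk (B n) j"
      using B0 by blast+
    obtain i j where ij: "i < j" "list_emb (list_emb P) (B i) (B j)"
      using g2 B(1) unfolding good_on_def by (drule_tac x=B in spec) auto
    obtain f where f: "strict_mono_on {..<length (concat (B i))} f"
      "f ` {..<length (concat (B i))} \<subseteq> {..<length (concat (B j))}"
      "\<forall>k<length (concat (B i)). \<forall>l<length (concat (B i)). blk (B i) k \<le> blk (B i) l \<longleftrightarrow> blk (B j) (f k) \<le> blk (B j) (f l)"
      "\<forall>k<length (concat (B i)). P (concat (B i) ! k) (concat (B j) ! f k)"
      using emb_q[OF ij(2)] by blast
    obtain s R where xi: "X i = (s, R)" by (cases "X i") auto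
    obtain t R' where xj: "X j = (t, R')" by (cases "X j") auto
    have ci: "concat (B i) = s" and cj: "concat (B j) = t" using B(2)[of i] B(2)[of j] xi xj by auto
    have Ri: "\<forall>k<length s. \<forall>l<length s. R k l \<longleftrightarrow> blk (B i) k \<le> blk (B i) l" using B(3)[of i] xi by simp
    have Rj: "\<forall>k<length t. \<forall>l<length t. R' k l \<longleftrightarrow> blk (B j) k \<le> blk (B j) l" using B(3)[of j] xj by simp
    have fr: "f k < length t" if "k < length s" for k using f(2) that ci cj by auto
    have "qoseq_le P (X i) (X j)" unfolding qoseq_le_def xi xj
    proof (simp, rule exI[of _ f], intro conjI)
      show "strict_mono_on {..<length s} f" using f(1) ci by simp
      show "f ` {..<length s} \<subseteq> {..<length t}" using f(2) ci cj by simp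
      show "\<forall>k<length s. \<forall>l<length s. R k l = R' (f k) (f l)"
      proof (intro allI impI)
        fix k l assume k: "k < length s" and l: "l < length s"
        have "R k l \<longleftrightarrow> blk (B i) k \<le> blk (B i) l" using Ri k l by blast
        also have "\<dots> \<longleftrightarrow> blk (B j) (f k) \<le> blk (B j) (f l)" using f(3) k l ci by blast
        also have "\<dots> \<longleftrightarrow> R' (f k) (f l)" using Rj fr[OF k] fr[OF l] by blast
        finally show "R k l = R' (f k) (f l)" .
      qed
      show "\<forall>k<length s. P (s ! k) (t ! f k)" using f(4) ci cj by simp
    qed
    then show "\<exists>i j. i < j \<and> qoseq_le P (X i) (X j)" using ij(1) by blast
  qed
qed

end
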